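(* A GNS $S\subseteq\mathbb{N}^d$ is quasi-irreducible if and only if for every $P\in PF(S)$, either $P\in FA(S)$ or $2P\in FA(S)$.
   Context: $\mathbb{N}=\{0,1,2,\dots\}$. A GNS is a submonoid $S\subseteq\mathbb{N}^d$ with finite complement $\mathcal{H}(S)=\mathbb{N}^d\setminus S$ (gaps). A relaxed monomial order is a total order $\prec$ on $\mathbb{N}^d$ with (i) $v\prec w\Rightarrow v\prec w+u$ for all $u\in\mathbb{N}^d$, (ii) $0\prec v$ for all $v\neq0$. A gap is Frobenius allowable if it equals $\max_\prec\mathcal{H}(S)$ for some relaxed monomial order; $FA(S)$ is the set of these. A gap $P$ is pseudo-Frobenius if $P+s\in S$ for all nonzero $s\in S$; $PF(S)$ is the set of these. $S$ is quasi-irreducible if for every $x\in\mathcal{H}(S)$, either $2x\in FA(S)$ or there is $F\in FA(S)$ with $F-x\in S$. *)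

theory Defs
  imports "HOL-Analysis.Analysis"
begin

text \<open>Points of N^d are modelled as vectors of type nat^'d, where the finite
  index type 'd has cardinality d.\<close>

definition GNS :: "(nat^'d) set \<Rightarrow> bool" where
  "GNS S \<longleftrightarrow> 0 \<in> S \<and> (\<forall>a\<in>S. \<forall>b\<in>S. a + b \<in> S) \<and> finite (UNIV - S)"

definition gaps :: "(nat^'d) set \<Rightarrow> (nat^'d) set" where
  "gaps S = UNIV - S"

definition relaxed_monomial_order :: "(nat^'d \<Rightarrow> nat^'d \<Rightarrow> bool) \<Rightarrow> bool" where
  "relaxed_monomial_order lt \<longleftrightarrow>
     (\<forall>v. \<not> lt v v) \<and>
     (\<forall>u v w. lt u v \<longrightarrow> lt v w \<longrightarrow> lt u w) \<and>
     (\<forall>v w. v \<noteq> w \<longrightarrow> lt v w \<or> lt w v) \<and>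
     (\<forall>v w u. lt v w \<longrightarrow> lt v (w + u)) \<and>
     (\<forall>v. v \<noteq> 0 \<longrightarrow> lt 0 v)"

definition is_max_wrt :: "(nat^'d \<Rightarrow> nat^'d \<Rightarrow> bool) \<Rightarrow> (nat^'d) set \<Rightarrow> nat^'d \<Rightarrow> bool" where
  "is_max_wrt lt A F \<longleftrightarrow> F \<in> A \<and> (\<forall>h\<in>A. h \<noteq> F \<longrightarrow> lt h F)"

definition FA :: "(nat^'d) set \<Rightarrow> (nat^'d) set" where
  "FA S = {F. \<exists>lt. relaxed_monomial_order lt \<and> is_max_wrt lt (gaps S) F}"

definition PF :: "(nat^'d) set \<Rightarrow> (nat^'d) set" where
  "PF S = {P \<in> gaps S. \<forall>s\<in>S. s \<noteq> 0 \<longrightarrow> P + s \<in> S}"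

definition quasi_irreducible :: "(nat^'d) set \<Rightarrow> bool" where
  "quasi_irreducible S \<longleftrightarrow>
     (\<forall>x\<in>gaps S. x + x \<in> FA S \<or> (\<exists>F\<in>FA S. \<exists>s\<in>S. F = x + s))"

end

theory Submission
  imports Defs
begin

definition csum :: "nat^'d \<Rightarrow> nat" where "csum v = (\<Sum>i\<in>UNIV. v $ i)"

lemma csum_add: "csum (a + b) = csum a + csum b"
  by (simp add: csum_def sum.distrib)

lemma csum_pos: "(v::nat^'d) \<noteq> 0 \<Longrightarrow> csum v > 0"
proof -
  assume "v \<noteq> 0"
  then obtain i where "v $ i \<noteq> 0" by (auto simp: vec_eq_iff)
  then have "v $ i \<le> csum v" unfolding csum_def
    by (intro member_le_sum) auto
  with \<open>v $ i \<noteq> 0\<close> show ?thesis by simp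
qed

theorem proposition3p3:
  fixes S :: "(nat^'d) set"
  assumes "GNS S"
  shows "quasi_irreducible S \<longleftrightarrow> (\<forall>P\<in>PF S. P \<in> FA S \<or> P + P \<in> FA S)"
proof
  assume q: "quasi_irreducible S"
  show "\<forall>P\<in>PF S. P \<in> FA S \<or> P + P \<in> FA S"
  proof
    fix P assume P: "P \<in> PF S"
    hence Pg: "P \<in> gaps S" and Pp: "\<forall>s\<in>S. s \<noteq> 0 \<longrightarrow> P + s \<in> S" by (auto simp: PF_def)
    from q Pg have "P + P \<in> FA S \<or> (\<exists>F\<in>FA S. \<exists>s\<in>S. F = P + s)"
      by (auto simp: quasi_irreducible_def)
    moreover
    { fix F s assume F: "F \<in> FA S" "s \<in> S" "F = P + s"
      have "F \<in> gaps S" using F(1) by (auto simp: FA_def is_max_wrt_def)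
      hence "s = 0" using Pp F(2,3) by (auto simp: gaps_def)
      hence "P \<in> FA S" using F by simp }
    ultimately show "P \<in> FA S \<or> P + P \<in> FA S" by blast
  qed
next
  assume h: "\<forall>P\<in>PF S. P \<in> FA S \<or> P + P \<in> FA S"
  have S0: "0 \<in> S" and Sadd: "\<And>a b. a \<in> S \<Longrightarrow> b \<in> S \<Longrightarrow> a + b \<in> S"
    and fin: "finite (gaps S)"
    using assms by (auto simp: GNS_def gaps_def)
  show "quasi_irreducible S" unfolding quasi_irreducible_def
  proof
    fix x assume x: "x \<in> gaps S"
    define A where "A = {s \<in> S. x + s \<in> gaps S}"
    have "A \<subseteq> (\<lambda>g. g - x) ` gaps S"
    proof
      fix s assume "s \<in> A"
      hence "x + s \<in> gaps S" "s = (x + s) - x" by (auto simp: A_def)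
      thus "s \<in> (\<lambda>g. g - x) ` gaps S" by blast
    qed
    hence finA: "finite A" using fin finite_surj by blast
    have A0: "0 \<in> A" using S0 x by (simp add: A_def)
    have ne: "csum ` A \<noteq> {}" using A0 by blast
    obtain s where sA: "s \<in> A" and smax: "csum s = Max (csum ` A)"
      using Max_in[OF finite_imageI[OF finA] ne] by auto
    have sle: "\<And>t. t \<in> A \<Longrightarrow> csum t \<le> csum s"
      using smax finA by simp
    have sS: "s \<in> S" and Pg: "x + s \<in> gaps S" using sA by (auto simp: A_def)
    have PF: "x + s \<in> PF S"
      unfolding PF_def
    proof (intro CollectI conjI ballI impI Pg)
      fix t assume t: "t \<in> S" "t \<noteq> 0"
      show "x + s + t \<in> S"
      proof (rule ccontr)
        assume "x + s + t \<notin> S"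
        hence "s + t \<in> A" using Sadd[OF sS t(1)]
          by (auto simp: A_def gaps_def add.assoc)
        hence "csum (s + t) \<le> csum s" by (rule sle)
        thus False using csum_pos[OF t(2)] by (simp add: csum_add)
      qed
    qed
    from h PF have "x + s \<in> FA S \<or> (x + s) + (x + s) \<in> FA S" by blast
    thus "x + x \<in> FA S \<or> (\<exists>F\<in>FA S. \<exists>s\<in>S. F = x + s)"
    proof
      assume "x + s \<in> FA S" thus ?thesis using sS by blast
    next
      assume F: "(x + s) + (x + s) \<in> FA S"
      show ?thesis
      proof (cases "s = 0")
        case True thus ?thesis using F by simp
      next
        case False
        have "x + s + s \<in> S" using PF sS False by (auto simp: PF_def)
        moreover have "(x + s) + (x + s) = x + (x + s + s)" by (simp add: algebra_simps)
        ultimately show ?thesis using F by metis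
      qed
    qed
  qed
qed

end
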